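(* Let $n\ge3$ and let $f$ be a $\gamma_{tr3}(P_3\square P_n)$-function such that the number of vertices $v$ with $f(v)=\emptyset$ is minimum among all $\gamma_{tr3}(P_3\square P_n)$-functions. Then $|f((i,0))|=1$ for every $i\in\{0,1,2\}$ and $|f((0,j))|=1$ for every $j\in\{1,2,\dots,n-1\}$.
   Context: $P_m$ denotes the directed path with vertex set $\{0,1,\dots,m-1\}$ and arcs $(i,i+1)$ for $0\le i\le m-2$. The Cartesian product $D_1\square D_2$ has vertex set $V(D_1)\times V(D_2)$, with an arc from $(x_1,y_1)$ to $(x_2,y_2)$ iff either $(x_1,x_2)$ is an arc of $D_1$ and $y_1=y_2$, or $x_1=x_2$ and $(y_1,y_2)$ is an arc of $D_2$. For a digraph $D$ and positive integer $k$, a $k$-rainbow dominating function on $D$ is $f:V(D)\to\mathcal P(\{1,\dots,k\})$ such that every $v$ with $f(v)=\emptyset$ satisfies $\bigcup_{u\in N^-(v)}f(u)=\{1,\dots,k\}$, where $N^-(v)$ is the set of in-neighbors of $v$; its weight is $\sum_v|f(v)|$. It is total if additionally the subdigraph induced by $\{v:f(v)\ne\emptyset\}$ has no isolated vertex (a vertex with neither in- nor out-neighbors in it). $\gamma_{trk}(D)$ is the minimum weight of a total $k$-rainbow dominating function, and a $\gamma_{trk}(D)$-function is one attaining it. *)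

theory Defs
  imports Main
begin

type_synonym 'a digraph = "'a set \<times> ('a \<times> 'a) set"

definition verts :: "'a digraph \<Rightarrow> 'a set" where "verts D = fst D"
definition arcs :: "'a digraph \<Rightarrow> ('a \<times> 'a) set" where "arcs D = snd D"

definition dipath :: "nat \<Rightarrow> nat digraph" where
  "dipath m = ({0..<m}, {(i, Suc i) | i. Suc i < m})"

definition cart_prod :: "'a digraph \<Rightarrow> 'b digraph \<Rightarrow> ('a \<times> 'b) digraph" where
  "cart_prod D1 D2 = (verts D1 \<times> verts D2,
     {((x1, y1), (x2, y2)) | x1 y1 x2 y2.
        x1 \<in> verts D1 \<and> x2 \<in> verts D1 \<and> y1 \<in> verts D2 \<and> y2 \<in> verts D2 \<and>
        (((x1, x2) \<in> arcs D1 \<and> y1 = y2) \<or> (x1 = x2 \<and> (y1, y2) \<in> arcs D2))})"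

definition in_nbrs :: "'a digraph \<Rightarrow> 'a \<Rightarrow> 'a set" where
  "in_nbrs D v = {u \<in> verts D. (u, v) \<in> arcs D}"

definition rainbow_dom :: "'a digraph \<Rightarrow> nat \<Rightarrow> ('a \<Rightarrow> nat set) \<Rightarrow> bool" where
  "rainbow_dom D k f \<longleftrightarrow>
     (\<forall>v \<in> verts D. f v \<subseteq> {1..k}) \<and>
     (\<forall>v \<in> verts D. f v = {} \<longrightarrow> (\<Union>u \<in> in_nbrs D v. f u) = {1..k})"

text \<open>Total: the subdigraph induced by vertices with nonempty label has no isolated vertex.\<close>
definition total_rainbow_dom :: "'a digraph \<Rightarrow> nat \<Rightarrow> ('a \<Rightarrow> nat set) \<Rightarrow> bool" where
  "total_rainbow_dom D k f \<longleftrightarrow> rainbow_dom D k f \<and>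
     (\<forall>v \<in> verts D. f v \<noteq> {} \<longrightarrow>
        (\<exists>u \<in> verts D. u \<noteq> v \<and> f u \<noteq> {} \<and> ((u, v) \<in> arcs D \<or> (v, u) \<in> arcs D)))"

definition rd_weight :: "'a digraph \<Rightarrow> ('a \<Rightarrow> nat set) \<Rightarrow> nat" where
  "rd_weight D f = (\<Sum>v \<in> verts D. card (f v))"

definition gamma_tr :: "'a digraph \<Rightarrow> nat \<Rightarrow> nat" where
  "gamma_tr D k = (LEAST w. \<exists>f. total_rainbow_dom D k f \<and> rd_weight D f = w)"

definition gamma_tr_function :: "'a digraph \<Rightarrow> nat \<Rightarrow> ('a \<Rightarrow> nat set) \<Rightarrow> bool" where
  "gamma_tr_function D k f \<longleftrightarrow> total_rainbow_dom D k f \<and> rd_weight D f = gamma_tr D k"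

definition zero_verts :: "'a digraph \<Rightarrow> ('a \<Rightarrow> nat set) \<Rightarrow> 'a set" where
  "zero_verts D f = {v \<in> verts D. f v = {}}"

end

theory Submission
  imports Defs
begin

lemma exch:
  assumes fin: "finite (verts D)" and arcsub: "arcs D \<subseteq> verts D \<times> verts D"
    and noloop: "\<forall>x. (x,x) \<notin> arcs D"
    and k: "k \<ge> 1"
    and opt: "gamma_tr_function D k f"
    and minz: "\<forall>g. gamma_tr_function D k g \<longrightarrow> card (zero_verts D f) \<le> card (zero_verts D g)"
    and v: "v \<in> verts D" and ge: "card (f v) \<ge> 2"
    and Zc: "card {w\<in>verts D. (v,w)\<in>arcs D \<and> f w = {}} + 1 \<le> card (f v)"
  shows False
proof -
  define Z where "Z = {w\<in>verts D. (v,w)\<in>arcs D \<and> f w = {}}"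
  have tr: "total_rainbow_dom D k f" and wf: "rd_weight D f = gamma_tr D k"
    using opt unfolding gamma_tr_function_def by auto
  have sub: "\<forall>x\<in>verts D. f x \<subseteq> {1..k}"
    and dom: "\<forall>x\<in>verts D. f x = {} \<longrightarrow> (\<Union>u \<in> in_nbrs D x. f u) = {1..k}"
    and tot: "\<forall>x\<in>verts D. f x \<noteq> {} \<longrightarrow>
        (\<exists>u \<in> verts D. u \<noteq> x \<and> f u \<noteq> {} \<and> ((u, x) \<in> arcs D \<or> (x, u) \<in> arcs D))"
    using tr unfolding total_rainbow_dom_def rainbow_dom_def by auto
  have "f v \<noteq> {}" using ge by (cases "f v = {}") auto
  then obtain a where a: "a \<in> f v" by blast
  define g where "g = (\<lambda>x. if x = v then {a} else if x \<in> Z then {1} else f x)"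
  have aK: "a \<in> {1..k}" using sub a v by blast
  have gsub: "\<And>x. x \<in> verts D \<Longrightarrow> g x \<subseteq> {1..k}"
  proof -
    fix x assume x: "x \<in> verts D"
    have "f x \<subseteq> {1..k}" using sub x by blast
    then show "g x \<subseteq> {1..k}" using aK k unfolding g_def by auto
  qed
  have vZ: "v \<notin> Z" using noloop unfolding Z_def by auto
  have ZV: "Z \<subseteq> verts D" unfolding Z_def by auto
  have finZ: "finite Z" using fin ZV finite_subset by blast
  have gsup: "\<And>x. x \<noteq> v \<Longrightarrow> f x \<subseteq> g x" unfolding g_def Z_def by auto
  have gne: "\<And>x. f x \<noteq> {} \<Longrightarrow> g x \<noteq> {}" unfolding g_def by auto
  have trg: "total_rainbow_dom D k g"
    unfolding total_rainbow_dom_def rainbow_dom_def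
  proof (intro conjI ballI impI)
    fix x assume x: "x \<in> verts D"
    show "g x \<subseteq> {1..k}" using gsub x by blast
  next
    fix x assume x: "x \<in> verts D" and gx: "g x = {}"
    have xv: "x \<noteq> v" using gx unfolding g_def by auto
    have xZ: "x \<notin> Z" using gx xv unfolding g_def by auto
    have fx: "f x = {}" using gx xv xZ unfolding g_def by auto
    have nov: "\<forall>u\<in>in_nbrs D x. u \<noteq> v" using xZ fx x unfolding Z_def in_nbrs_def by auto
    have "(\<Union>u \<in> in_nbrs D x. f u) \<subseteq> (\<Union>u \<in> in_nbrs D x. g u)" using nov gsup by blast
    moreover have "(\<Union>u \<in> in_nbrs D x. g u) \<subseteq> {1..k}"
    proof
      fix y assume "y \<in> (\<Union>u \<in> in_nbrs D x. g u)"
      then obtain u where u: "u \<in> in_nbrs D x" "y \<in> g u" by auto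
      have "u \<in> verts D" using u unfolding in_nbrs_def by auto
      then show "y \<in> {1..k}" using u gsub by blast
    qed
    ultimately show "(\<Union>u \<in> in_nbrs D x. g u) = {1..k}" using dom x fx by auto
  next
    fix x assume x: "x \<in> verts D" and gx: "g x \<noteq> {}"
    show "\<exists>u \<in> verts D. u \<noteq> x \<and> g u \<noteq> {} \<and> ((u, x) \<in> arcs D \<or> (x, u) \<in> arcs D)"
    proof (cases "x \<in> Z")
      case True
      then have "(v,x) \<in> arcs D" unfolding Z_def by auto
      moreover have "v \<noteq> x" using True vZ by auto
      ultimately show ?thesis using v unfolding g_def by auto
    next
      case False
      have "f x \<noteq> {}" using gx False \<open>f v \<noteq> {}\<close> unfolding g_def by (auto split: if_splits)
      then obtain u where "u \<in> verts D" "u \<noteq> x" "f u \<noteq> {}" "(u, x) \<in> arcs D \<or> (x, u) \<in> arcs D"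
        using tot x by blast
      then show ?thesis using gne by blast
    qed
  qed
  have wsum: "rd_weight D g + card (f v) = rd_weight D f + 1 + card Z"
  proof -
    have s1: "rd_weight D g = card (g v) + (\<Sum>x\<in>verts D - {v}. card (g x))"
      unfolding rd_weight_def using sum.remove[OF fin v] by simp
    have s2: "rd_weight D f = card (f v) + (\<Sum>x\<in>verts D - {v}. card (f x))"
      unfolding rd_weight_def using sum.remove[OF fin v] by simp
    have "(\<Sum>x\<in>verts D - {v}. card (g x)) = (\<Sum>x\<in>verts D - {v}. card (f x) + (if x \<in> Z then 1 else 0))"
      by (rule sum.cong) (auto simp: g_def Z_def)
    also have "\<dots> = (\<Sum>x\<in>verts D - {v}. card (f x)) + card Z"
    proof -
      have "(\<Sum>x\<in>verts D - {v}. (if x \<in> Z then 1 else 0::nat)) = card ((verts D - {v}) \<inter> Z)"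
        using fin by (simp add: sum.If_cases)
      also have "(verts D - {v}) \<inter> Z = Z" using ZV vZ by auto
      finally show ?thesis by (simp add: sum.distrib)
    qed
    finally show ?thesis using s1 s2 by (simp add: g_def)
  qed
  have "gamma_tr D k \<le> rd_weight D g"
    unfolding gamma_tr_def by (rule Least_le) (use trg in blast)
  then have eq: "card (f v) = 1 + card Z" using wsum wf Zc Z_def by simp
  then have "rd_weight D g = gamma_tr D k" using wsum wf by simp
  then have "gamma_tr_function D k g" using trg unfolding gamma_tr_function_def by simp
  then have le: "card (zero_verts D f) \<le> card (zero_verts D g)" using minz by blast
  have zg: "zero_verts D g = zero_verts D f - Z"
    unfolding zero_verts_def g_def using vZ \<open>f v \<noteq> {}\<close> by (auto simp: Z_def)
  have Zz: "Z \<subseteq> zero_verts D f" unfolding Z_def zero_verts_def by auto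
  have finz: "finite (zero_verts D f)" using fin unfolding zero_verts_def by auto
  have "card Z \<ge> 1" using eq ge by simp
  moreover have "card (zero_verts D g) = card (zero_verts D f) - card Z"
    using zg Zz finZ by (simp add: card_Diff_subset)
  moreover have "card Z \<le> card (zero_verts D f)" using Zz finz card_mono by blast
  ultimately show False using le by linarith
qed

lemma vertsD: "verts (cart_prod (dipath 3) (dipath n)) = {0..<3} \<times> {0..<n}"
  by (simp add: cart_prod_def verts_def dipath_def)

lemma arcsD: "(((x1,y1),(x2,y2)) \<in> arcs (cart_prod (dipath 3) (dipath n))) \<longleftrightarrow>
   (x1 < 3 \<and> y1 < n \<and> ((x2 = Suc x1 \<and> y2 = y1 \<and> Suc x1 < 3) \<or> (x2 = x1 \<and> y2 = Suc y1 \<and> Suc y1 < n)))"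
  by (auto simp: cart_prod_def verts_def arcs_def dipath_def)

lemma in_row: "Suc j < n \<Longrightarrow> in_nbrs (cart_prod (dipath 3) (dipath n)) (0, Suc j) = {(0,j)}"
  unfolding in_nbrs_def vertsD by (auto simp: arcsD)

lemma in_col: "Suc i < 3 \<Longrightarrow> 0 < n \<Longrightarrow> in_nbrs (cart_prod (dipath 3) (dipath n)) (Suc i, 0) = {(i,0)}"
  unfolding in_nbrs_def vertsD by (auto simp: arcsD)

lemma in_00: "in_nbrs (cart_prod (dipath 3) (dipath n)) (0, 0) = {}"
  unfolding in_nbrs_def vertsD by (auto simp: arcsD)

lemma single_in:
  assumes "rainbow_dom D 3 f" "w \<in> verts D" "f w = {}" "in_nbrs D w = {u}"
  shows "card (f u) = 3"
proof -
  have "(\<Union>x \<in> in_nbrs D w. f x) = {1..3}" using assms unfolding rainbow_dom_def by blast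
  then have "f u = {1..3}" using assms(4) by simp
  then show ?thesis by simp
qed

lemma boundary_le1:
  fixes n :: nat and f :: "nat \<times> nat \<Rightarrow> nat set"
  assumes n: "n \<ge> 3"
    and opt: "gamma_tr_function (cart_prod (dipath 3) (dipath n)) 3 f"
    and minz: "\<forall>g. gamma_tr_function (cart_prod (dipath 3) (dipath n)) 3 g \<longrightarrow>
           card (zero_verts (cart_prod (dipath 3) (dipath n)) f)
             \<le> card (zero_verts (cart_prod (dipath 3) (dipath n)) g)"
    and v: "(i = 0 \<and> j < n) \<or> (j = 0 \<and> i < 3)"
  shows "card (f (i,j)) \<le> 1"
proof (rule ccontr)
  let ?D = "cart_prod (dipath 3) (dipath n)"
  assume "\<not> card (f (i,j)) \<le> 1"
  then have ge: "card (f (i,j)) \<ge> 2" by simp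
  have rd: "rainbow_dom ?D 3 f" using opt unfolding gamma_tr_function_def total_rainbow_dom_def by blast
  have vV: "(i,j) \<in> verts ?D" using v n unfolding vertsD by auto
  have "f (i,j) \<subseteq> {1..3}" using rd vV unfolding rainbow_dom_def by blast
  then have le3: "card (f (i,j)) \<le> 3" using card_mono[of "{1..3::nat}"] by fastforce
  define Z where "Z = {w\<in>verts ?D. ((i,j),w)\<in>arcs ?D \<and> f w = {}}"
  have Zs: "Z \<subseteq> {(Suc i, j), (i, Suc j)}" unfolding Z_def vertsD by (auto simp: arcsD)
  have "card Z + 1 \<le> card (f (i,j))"
  proof (cases "card (f (i,j)) = 3")
    case True
    have "card Z \<le> card {(Suc i, j), (i, Suc j)}" using Zs by (intro card_mono) auto
    also have "\<dots> \<le> 2" by (simp add: card_insert_if)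
    finally show ?thesis using True by simp
  next
    case False
    then have c2: "card (f (i,j)) = 2" using ge le3 by simp
    have "Z \<subseteq> {(Suc i, j)} \<or> Z \<subseteq> {(i, Suc j)}"
    proof (cases "i = 0 \<and> j < n")
      case True
      have "(0, Suc j) \<notin> Z"
      proof
        assume a: "(0, Suc j) \<in> Z"
        then have "Suc j < n" unfolding Z_def vertsD by auto
        moreover have "(0, Suc j) \<in> verts ?D" "f (0, Suc j) = {}" using a unfolding Z_def by auto
        ultimately have "card (f (0,j)) = 3" using single_in[OF rd, of "(0, Suc j)" "(0,j)"] in_row
          by blast
        then show False using c2 True by simp
      qed
      then show ?thesis using Zs True by auto
    next
      case False
      then have ij: "j = 0" "i < 3" using v by auto
      have "(Suc i, 0) \<notin> Z"
      proof
        assume a: "(Suc i, 0) \<in> Z"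
        then have "Suc i < 3" unfolding Z_def vertsD by auto
        moreover have "(Suc i, 0) \<in> verts ?D" "f (Suc i, 0) = {}" using a unfolding Z_def by auto
        moreover have "0 < n" using n by simp
        ultimately have "card (f (i,0)) = 3" using single_in[OF rd, of "(Suc i, 0)" "(i,0)"] in_col
          by blast
        then show False using c2 ij by simp
      qed
      then show ?thesis using Zs ij by auto
    qed
    then obtain p where "Z \<subseteq> {p}" by blast
    then have "card Z \<le> card {p}" by (intro card_mono) auto
    then have "card Z \<le> 1" by simp
    then show ?thesis using c2 by simp
  qed
  moreover have "finite (verts ?D)" unfolding vertsD by simp
  moreover have "arcs ?D \<subseteq> verts ?D \<times> verts ?D"
    unfolding cart_prod_def arcs_def verts_def by auto
  moreover have "\<forall>x. (x,x) \<notin> arcs ?D"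
    by (auto simp: cart_prod_def arcs_def verts_def dipath_def)
  moreover have "(1::nat) \<le> 3" by simp
  ultimately show False
    using exch[of ?D 3 f "(i,j)"] opt minz vV ge
    unfolding Z_def by blast
qed

theorem lemma4p10:
  fixes n :: nat and f :: "nat \<times> nat \<Rightarrow> nat set"
  assumes "n \<ge> 3"
    and "gamma_tr_function (cart_prod (dipath 3) (dipath n)) 3 f"
    and "\<forall>g. gamma_tr_function (cart_prod (dipath 3) (dipath n)) 3 g \<longrightarrow>
           card (zero_verts (cart_prod (dipath 3) (dipath n)) f)
             \<le> card (zero_verts (cart_prod (dipath 3) (dipath n)) g)"
  shows "(\<forall>i \<in> {0,1,2}. card (f (i, 0)) = 1) \<and> (\<forall>j \<in> {1..n-1}. card (f (0, j)) = 1)"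
proof -
  let ?D = "cart_prod (dipath 3) (dipath n)"
  have rd: "rainbow_dom ?D 3 f" using assms(2) unfolding gamma_tr_function_def total_rainbow_dom_def by blast
  have le: "\<And>i j. (i = 0 \<and> j < n) \<or> (j = 0 \<and> i < 3) \<Longrightarrow> card (f (i,j)) \<le> 1"
    using boundary_le1[OF assms] by blast
  have fin: "\<And>x. x \<in> verts ?D \<Longrightarrow> finite (f x)"
    using rd unfolding rainbow_dom_def by (meson finite_atLeastAtMost finite_subset)
  have ne: "\<And>i j. (i = 0 \<and> j < n) \<or> (j = 0 \<and> i < 3) \<Longrightarrow> f (i,j) \<noteq> {}"
  proof -
    fix i j :: nat assume v: "(i = 0 \<and> j < n) \<or> (j = 0 \<and> i < 3)"
    have vV: "(i,j) \<in> verts ?D" using v assms(1) unfolding vertsD by auto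
    show "f (i,j) \<noteq> {}"
    proof
      assume z: "f (i,j) = {}"
      show False
      proof (cases "i = 0 \<and> j = 0")
        case True
        then show False using rd vV z in_00[of n] unfolding rainbow_dom_def by auto
      next
        case False
        then consider (r) j' where "i = 0" "j = Suc j'" "j < n" | (c) i' where "j = 0" "i = Suc i'" "i < 3"
          using v by (cases i; cases j) auto
        then show False
        proof cases
          case r
          then have "card (f (0,j')) = 3" using single_in[OF rd vV z] in_row by simp
          then show False using le[of 0 j'] r by simp
        next
          case c
          then have "card (f (i',0)) = 3" using single_in[OF rd vV z] in_col assms(1) by simp
          then show False using le[of i' 0] c by simp
        qed
      qed
    qed
  qed
  have one: "\<And>i j. (i = 0 \<and> j < n) \<or> (j = 0 \<and> i < 3) \<Longrightarrow> card (f (i,j)) = 1"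
  proof -
    fix i j :: nat assume v: "(i = 0 \<and> j < n) \<or> (j = 0 \<and> i < 3)"
    have vV: "(i,j) \<in> verts ?D" using v assms(1) unfolding vertsD by auto
    have "card (f (i,j)) \<noteq> 0" using ne[OF v] fin[OF vV] by simp
    then show "card (f (i,j)) = 1" using le[OF v] by simp
  qed
  show ?thesis
  proof (intro conjI ballI)
    fix i :: nat assume "i \<in> {0,1,2}"
    then show "card (f (i,0)) = 1" using one by auto
  next
    fix j assume "j \<in> {1..n-1}"
    then show "card (f (0,j)) = 1" using one assms(1) by auto
  qed
qed

end
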